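(* Let $\mathscr{Y}\in\mathbb{R}^{m\times1\times n_3}$ and $\mathscr{V}\in\mathbb{R}^{n\times ms\times n_3}$ be such that $\mathscr{V}^T\diamondsuit\mathscr{V}=\mathscr{I}_{mmn_3}$. Then $\|\mathscr{V}\star(\mathscr{Y}\circledast\mathscr{I}_{ssn_3})\|_F=\|\mathscr{Y}\|_{T_{\ell_2}}$.
   Context: All tensors are real third-order arrays; $\|\cdot\|_F$ is the Frobenius norm (square root of the sum of squares of all entries). $\widehat{\mathscr{A}}=\mathscr{A}\times_3F_{n_3}$ denotes the tensor obtained by applying the discrete Fourier transform ($F_{n_3}$ with entries $\omega^{(i-1)(j-1)}$, $\omega=e^{-2\pi\mathrm{i}/n_3}$) to each tube; its frontal slices $\hat A^{(k)}$ are the Fourier slices. T-product: $\mathscr{A}\star\mathscr{B}$ has Fourier slices $\hat A^{(k)}\hat B^{(k)}$. Transpose $\mathscr{A}^T$: transpose each frontal slice and reverse the order of frontal slices $2,\dots,n_3$. $\mathscr{I}_{nnn_3}$: first frontal slice $I_n$, others zero. T-Kronecker product $\mathscr{A}\circledast\mathscr{B}$: Fourier slices $\hat A^{(k)}\otimes\hat B^{(k)}$. T-trace: the tube in $\mathbb{R}^{1\times1\times n_3}$ whose $k$-th Fourier slice is the trace of the $k$-th Fourier slice. Tubal inner product $\langle\mathscr{X},\mathscr{Y}\rangle_T=\text{T-trace}(\mathscr{X}^T\star\mathscr{Y})$. T-diamond product: for $\mathscr{V}=[\mathscr{V}_1,\dots,\mathscr{V}_m]$ with blocks $\mathscr{V}_i\in\mathbb{R}^{n\times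 s\times n_3}$, $\mathscr{V}^T\diamondsuit\mathscr{V}\in\mathbb{R}^{m\times m\times n_3}$ has $(i,j)$ tube $\langle\mathscr{V}_i,\mathscr{V}_j\rangle_T$. T-$\ell_2$ norm of $\mathscr{Y}\in\mathbb{R}^{m\times1\times n_3}$: $\|\mathscr{Y}\|_{T_{\ell_2}}=\frac{1}{\sqrt{n_3}}\big(\sum_{k=1}^{n_3}\|\hat Y^{(k)}\|_2^2\big)^{1/2}$, where $\hat Y^{(k)}\in\mathbb{C}^m$ are the Fourier slices. *)

theory Defs
  imports Complex_Main
begin

text \<open>A real third-order tensor of size p x q x n3 is represented as a function
  of three natural-number indices (row, column, frontal slice), 0-based;
  only entries with indices below the respective dimensions are meaningful.\<close>

type_synonym tensor = "nat \<Rightarrow> nat \<Rightarrow> nat \<Rightarrow> real"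
type_synonym ctensor = "nat \<Rightarrow> nat \<Rightarrow> nat \<Rightarrow> complex"

definition omega :: "nat \<Rightarrow> complex" where
  "omega n3 = cis (- 2 * pi / real n3)"

definition fhat :: "nat \<Rightarrow> tensor \<Rightarrow> ctensor" where
  "fhat n3 A = (\<lambda>i j k. \<Sum>l<n3. complex_of_real (A i j l) * omega n3 ^ (l * k))"

text \<open>Inverse DFT along tubes (real part; applied only to Fourier data of real tensors).\<close>
definition ifft :: "nat \<Rightarrow> ctensor \<Rightarrow> tensor" where
  "ifft n3 C = (\<lambda>i j l. Re ((\<Sum>k<n3. C i j k * inverse (omega n3) ^ (l * k)) / of_nat n3))"

definition tprod :: "nat \<Rightarrow> nat \<Rightarrow> tensor \<Rightarrow> tensor \<Rightarrow> tensor" where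
  "tprod n3 r A B = ifft n3 (\<lambda>i j k. \<Sum>t<r. fhat n3 A i t k * fhat n3 B t j k)"

definition ttrans :: "nat \<Rightarrow> tensor \<Rightarrow> tensor" where
  "ttrans n3 A = (\<lambda>i j l. A j i ((n3 - l) mod n3))"

definition tid :: tensor where
  "tid = (\<lambda>i j l. if i = j \<and> l = 0 then 1 else 0)"

text \<open>T-Kronecker product of A (p x q x n3) with B (r x t x n3): Fourier slices are the
  Kronecker products; entry (i*r+a, j*t+b) of the Kronecker product is A(i,j)*B(a,b).\<close>
definition tkron :: "nat \<Rightarrow> nat \<Rightarrow> nat \<Rightarrow> tensor \<Rightarrow> tensor \<Rightarrow> tensor" where
  "tkron n3 r t A B = ifft n3 (\<lambda>i j k. fhat n3 A (i div r) (j div t) k * fhat n3 B (i mod r) (j mod t) k)"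

definition ttrace :: "nat \<Rightarrow> nat \<Rightarrow> tensor \<Rightarrow> (nat \<Rightarrow> real)" where
  "ttrace n3 p X = (\<lambda>l. ifft n3 (\<lambda>_ _ k. \<Sum>i<p. fhat n3 X i i k) 0 0 l)"

definition tinner :: "nat \<Rightarrow> nat \<Rightarrow> nat \<Rightarrow> tensor \<Rightarrow> tensor \<Rightarrow> (nat \<Rightarrow> real)" where
  "tinner n3 n s X Y = ttrace n3 s (tprod n3 n (ttrans n3 X) Y)"

definition tblock :: "nat \<Rightarrow> nat \<Rightarrow> tensor \<Rightarrow> tensor" where
  "tblock s i V = (\<lambda>a b l. V a (i * s + b) l)"

definition tdiamond :: "nat \<Rightarrow> nat \<Rightarrow> nat \<Rightarrow> tensor \<Rightarrow> tensor" where
  "tdiamond n3 n s V = (\<lambda>i j l. tinner n3 n s (tblock s i V) (tblock s j V) l)"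

definition frob :: "nat \<Rightarrow> nat \<Rightarrow> nat \<Rightarrow> tensor \<Rightarrow> real" where
  "frob p q n3 A = sqrt (\<Sum>i<p. \<Sum>j<q. \<Sum>l<n3. (A i j l)\<^sup>2)"

definition tl2 :: "nat \<Rightarrow> nat \<Rightarrow> tensor \<Rightarrow> real" where
  "tl2 m n3 Y = (1 / sqrt (real n3)) * sqrt (\<Sum>k<n3. \<Sum>i<m. (cmod (fhat n3 Y i 0 k))\<^sup>2)"

end

theory Submission
  imports Defs
begin

lemma int_sub_mod:
  assumes "b \<le> n"
  shows "int ((a + n - b) mod n) = (int a - int b) mod int n"
proof -
  have "int (a + n - b) = (int a - int b) + int n" using assms by simp
  then show ?thesis by (simp add: of_nat_mod)
qed

lemma modA: "u < (n::nat) \<Longrightarrow> p < n \<Longrightarrow> ((u + p) mod n + n - p) mod n = u"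
proof -
  assume a: "u < n" "p < n"
  have "int (((u + p) mod n + n - p) mod n) = (int ((u+p) mod n) - int p) mod int n"
    using a by (simp add: int_sub_mod)
  also have "\<dots> = int u" using a by (simp add: of_nat_mod mod_diff_left_eq)
  finally show ?thesis by simp
qed

lemma modB: "u < (n::nat) \<Longrightarrow> p < n \<Longrightarrow> d < n \<Longrightarrow>
  ((u + p) mod n + n - (d + p) mod n) mod n = (u + n - d) mod n"
proof -
  assume a: "u < n" "p < n" "d < n"
  have "int (((u + p) mod n + n - (d + p) mod n) mod n) = (int ((u+p) mod n) - int ((d + p) mod n)) mod int n"
    using a by (simp add: int_sub_mod)
  also have "\<dots> = ((int u + int p) mod int n - (int d + int p) mod int n) mod int n"
    by (simp only: of_nat_mod of_nat_add)
  also have "\<dots> = ((int u + int p) - (int d + int p)) mod int n"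
    by (rule mod_diff_eq)
  also have "\<dots> = (int u - int d) mod int n" by simp
  also have "\<dots> = int ((u + n - d) mod n)" using a by (simp add: int_sub_mod)
  finally show ?thesis by simp
qed

lemma modC: "p < (n::nat) \<Longrightarrow> d < n \<Longrightarrow> (d + n - p) mod n = (d + (n - p) mod n) mod n"
proof -
  assume a: "p < n" "d < n"
  have "int ((d + n - p) mod n) = (int d - int p) mod int n" using a by (simp add: int_sub_mod)
  also have "\<dots> = (int d + (int n - int p) mod int n) mod int n"
    by (simp add: mod_add_right_eq)
  also have "\<dots> = int ((d + (n - p) mod n) mod n)" using a by (simp add: of_nat_mod of_nat_diff)
  finally show ?thesis by simp
qed

lemma modD: "p < (n::nat) \<Longrightarrow> q < n \<Longrightarrow> l < n \<Longrightarrow> ((p + q) mod n = l) = (q = (l + n - p) mod n)"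
proof -
  assume a: "p < n" "q < n" "l < n"
  have "((p + q) mod n = l) = (int ((p + q) mod n) = int l)" by simp
  also have "\<dots> = ((int p + int q) mod int n = int l mod int n)" using a by (simp add: of_nat_mod)
  also have "\<dots> = (int q mod int n = (int l - int p) mod int n)"
    unfolding mod_eq_dvd_iff by (simp add: algebra_simps)
  also have "\<dots> = (int q = int ((l + n - p) mod n))" using a by (simp add: int_sub_mod)
  also have "\<dots> = (q = (l + n - p) mod n)" by linarith
  finally show ?thesis .
qed

lemma sum_shift:
  assumes "0 < (n::nat)"
  shows "(\<Sum>p<n. f ((p + c) mod n)) = (\<Sum>p<n. f p)"
proof -
  let ?g = "\<lambda>p. (p + c) mod n"
  have inj: "inj_on ?g {..<n}"
  proof
    fix x y assume "x \<in> {..<n}" "y \<in> {..<n}" "?g x = ?g y"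
    then have h: "(int x + int c) mod int n = (int y + int c) mod int n"
      by (metis of_nat_add of_nat_mod)
    have "((int x + int c) - int c) mod int n = ((int y + int c) - int c) mod int n"
      by (rule mod_diff_cong[OF h refl])
    then have "int x mod int n = int y mod int n" by simp
    then show "x = y" using \<open>x \<in> {..<n}\<close> \<open>y \<in> {..<n}\<close> by simp
  qed
  have "?g ` {..<n} = {..<n}"
    by (rule endo_inj_surj) (use inj assms in auto)
  then show ?thesis using sum.reindex[OF inj, of f] by simp
qed

lemma sum_refl:
  assumes "0 < (n::nat)"
  shows "(\<Sum>p<n. f ((n - p) mod n)) = (\<Sum>p<n. f p)"
proof -
  let ?g = "\<lambda>p. (n - p) mod n"
  have inj: "inj_on ?g {..<n}"
  proof
    fix x y assume "x \<in> {..<n}" "y \<in> {..<n}" "?g x = ?g y"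
    then show "x = y"
      by (cases "x = 0"; cases "y = 0") auto
  qed
  have "?g ` {..<n} = {..<n}"
    by (rule endo_inj_surj) (use inj assms in auto)
  then show ?thesis using sum.reindex[OF inj, of f] by simp
qed

lemma swap_1_4:
  "(\<Sum>l\<in>L. \<Sum>i\<in>I. \<Sum>j\<in>J. \<Sum>p\<in>P. \<Sum>q\<in>Q. f l i j p q) = (\<Sum>i\<in>I. \<Sum>j\<in>J. \<Sum>p\<in>P. \<Sum>q\<in>Q. \<Sum>l\<in>L. f l i j p q)"
  apply (subst sum.swap[where A=L and B=I])
  apply (rule sum.cong[OF refl])
  apply (subst sum.swap[where A=L and B=J])
  apply (rule sum.cong[OF refl])
  apply (subst sum.swap[where A=L and B=P])
  apply (rule sum.cong[OF refl])
  apply (subst sum.swap[where A=L and B=Q])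
  apply (rule refl)
  done

lemma swap_2_2:
  "(\<Sum>a\<in>A. \<Sum>b\<in>B. \<Sum>i\<in>I. \<Sum>j\<in>J. f a b i j) = (\<Sum>i\<in>I. \<Sum>j\<in>J. \<Sum>a\<in>A. \<Sum>b\<in>B. f a b i j)"
proof -
  have "(\<Sum>a\<in>A. \<Sum>b\<in>B. \<Sum>i\<in>I. \<Sum>j\<in>J. f a b i j) = (\<Sum>a\<in>A. \<Sum>i\<in>I. \<Sum>j\<in>J. \<Sum>b\<in>B. f a b i j)"
    apply (rule sum.cong[OF refl])
    apply (subst sum.swap[where A=B and B=I])
    apply (rule sum.cong[OF refl])
    apply (subst sum.swap[where A=B and B=J])
    apply (rule refl)
    done
  also have "\<dots> = (\<Sum>i\<in>I. \<Sum>j\<in>J. \<Sum>a\<in>A. \<Sum>b\<in>B. f a b i j)"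
    apply (subst sum.swap[where A=A and B=I])
    apply (rule sum.cong[OF refl])
    apply (subst sum.swap[where A=A and B=J])
    apply (rule refl)
    done
  finally show ?thesis .
qed

lemma swap_3_2:
  "(\<Sum>a\<in>A. \<Sum>b\<in>B. \<Sum>p\<in>P. \<Sum>d\<in>D. \<Sum>u\<in>U. f a b p d u) = (\<Sum>d\<in>D. \<Sum>u\<in>U. \<Sum>b\<in>B. \<Sum>a\<in>A. \<Sum>p\<in>P. f a b p d u)"
proof -
  have "(\<Sum>a\<in>A. \<Sum>b\<in>B. \<Sum>p\<in>P. \<Sum>d\<in>D. \<Sum>u\<in>U. f a b p d u) = (\<Sum>b\<in>B. \<Sum>a\<in>A. \<Sum>p\<in>P. \<Sum>d\<in>D. \<Sum>u\<in>U. f a b p d u)"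
    by (rule sum.swap)
  also have "\<dots> = (\<Sum>b\<in>B. \<Sum>d\<in>D. \<Sum>u\<in>U. \<Sum>a\<in>A. \<Sum>p\<in>P. f a b p d u)"
    apply (rule sum.cong[OF refl])
    apply (subst swap_2_2)
    apply (rule refl)
    done
  also have "\<dots> = (\<Sum>d\<in>D. \<Sum>u\<in>U. \<Sum>b\<in>B. \<Sum>a\<in>A. \<Sum>p\<in>P. f a b p d u)"
    apply (subst sum.swap[where A=B and B=D])
    apply (rule sum.cong[OF refl])
    apply (subst sum.swap[where A=B and B=U])
    apply (rule refl)
    done
  finally show ?thesis .
qed

lemma omega_pow: "omega n ^ j = cis (- 2 * pi * real j / real n)"
  unfolding omega_def by (simp add: DeMoivre mult.commute)

lemma inv_omega_pow: "inverse (omega n) ^ j = cis (2 * pi * real j / real n)"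
  unfolding omega_def by (simp add: DeMoivre power_inverse[symmetric] mult.commute)

lemma cis_ne_1:
  fixes d :: int and n :: nat
  assumes "d \<noteq> 0" "\<bar>d\<bar> < int n"
  shows "cis (2 * pi * real_of_int d / real n) \<noteq> 1"
proof
  assume h: "cis (2 * pi * real_of_int d / real n) = 1"
  then have "cos (2 * pi * real_of_int d / real n) = 1"
    by (metis Re_complex_of_real cis.sel(1) complex_Re_of_int of_int_1)
  then obtain N :: int where N: "2 * pi * real_of_int d / real n = real_of_int N * 2 * pi"
    using cos_one_2pi_int by blast
  have npos: "real n > 0" using assms by simp
  have "real_of_int d = real_of_int N * real n"
    using N npos by (simp add: field_simps)
  then have dN: "d = N * int n" by (metis of_int_eq_iff of_int_mult of_int_of_nat_eq)
  show False
  proof (cases "N = 0")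
    case True then show ?thesis using dN assms by simp
  next
    case False
    then have "\<bar>N\<bar> \<ge> 1" by simp
    then have "\<bar>d\<bar> \<ge> int n" using dN by (simp add: abs_mult mult_le_cancel_right1)
    then show ?thesis using assms by simp
  qed
qed

lemma orth:
  assumes "p < n" "q < n"
  shows "(\<Sum>k<n. omega n ^ (p * k) * inverse (omega n) ^ (q * k)) = (if p = q then of_nat n else 0)"
proof -
  define z where "z = cis (2 * pi * real_of_int (int q - int p) / real n)"
  have e: "omega n ^ (p * k) * inverse (omega n) ^ (q * k) = z ^ k" for k
    unfolding z_def omega_pow inv_omega_pow DeMoivre cis_mult
    by (rule arg_cong[where f=cis]) (simp add: field_simps diff_divide_distrib)
  have S: "(\<Sum>k<n. omega n ^ (p * k) * inverse (omega n) ^ (q * k)) = (\<Sum>k<n. z ^ k)"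
    by (simp only: e)
  show ?thesis
  proof (cases "p = q")
    case True
    then have "z = 1" unfolding z_def by simp
    then show ?thesis using True S by simp
  next
    case False
    have z1: "z \<noteq> 1" unfolding z_def
      by (rule cis_ne_1) (use False assms in auto)
    have "z ^ n = cis (2 * pi * real_of_int (int q - int p))"
    proof -
      have "real n \<noteq> 0" using assms by simp
      then show ?thesis unfolding z_def DeMoivre by simp
    qed
    also have "\<dots> = 1" by (rule cis_multiple_2pi) simp
    finally have "z ^ n = 1" .
    then show ?thesis using False z1 S by (simp add: geometric_sum)
  qed
qed

lemma omega_pow_mod:
  assumes "0 < n"
  shows "omega n ^ a = omega n ^ (a mod n)"
proof -
  have "omega n ^ n = 1" unfolding omega_pow using assms
    by (simp add: cis_multiple_2pi[of "-1", simplified])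
  then show ?thesis
    by (metis mod_mult_div_eq mult.commute power_add power_mult power_one mult_1)
qed


lemma swap_lemma:
  fixes c :: "nat \<Rightarrow> complex"
  shows "(\<Sum>k<n. (\<Sum>p<n. c p * u p k) * v k) = (\<Sum>p<n. c p * (\<Sum>k<n. u p k * v k))"
  unfolding sum_distrib_right sum_distrib_left
  by (rule trans[OF sum.swap]) (simp add: mult_ac)

lemma swap_lemma2:
  fixes c :: "nat \<Rightarrow> complex"
  shows "(\<Sum>k<n. a k * (\<Sum>q<n. c q * b q k)) = (\<Sum>q<n. c q * (\<Sum>k<n. a k * b q k))"
  unfolding sum_distrib_left
  by (rule trans[OF sum.swap]) (simp add: mult_ac)

lemma inv_dft:
  assumes "0 < n" "l < n"
  shows "(\<Sum>k<n. (\<Sum>p<n. of_real (f p) * omega n ^ (p * k)) * inverse (omega n) ^ (l * k)) / of_nat n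
         = complex_of_real (f l)"
proof -
  have "(\<Sum>k<n. (\<Sum>p<n. of_real (f p) * omega n ^ (p * k)) * inverse (omega n) ^ (l * k))
      = (\<Sum>p<n. complex_of_real (f p) * (\<Sum>k<n. omega n ^ (p * k) * inverse (omega n) ^ (l * k)))"
    by (rule swap_lemma)
  also have "\<dots> = (\<Sum>p<n. complex_of_real (f p) * (if p = l then of_nat n else 0))"
    using assms by (intro sum.cong refl) (simp add: orth)
  also have "\<dots> = complex_of_real (f l) * of_nat n"
    using assms by (simp add: if_distrib sum.delta' cong: if_cong)
  finally show ?thesis using assms by simp
qed

lemma omega_mult_mod:
  assumes "0 < n"
  shows "omega n ^ (q * k) * (omega n ^ (p * k) * X) = omega n ^ (((p + q) mod n) * k) * X"
proof -
  have "omega n ^ ((p + q) * k) = omega n ^ (((p + q) * k) mod n)" by (rule omega_pow_mod[OF assms(1)])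
  also have "\<dots> = omega n ^ ((((p + q) mod n) * k) mod n)" by (simp add: mod_mult_left_eq)
  also have "\<dots> = omega n ^ (((p + q) mod n) * k)" by (rule omega_pow_mod[OF assms(1), symmetric])
  finally have "omega n ^ (q * k) * omega n ^ (p * k) = omega n ^ (((p + q) mod n) * k)"
    by (simp add: power_add[symmetric] add_mult_distrib add.commute)
  then show ?thesis by (simp add: mult.assoc[symmetric])
qed

lemma conv_dft:
  assumes "0 < n" "l < n"
  shows "(\<Sum>k<n. (\<Sum>p<n. of_real (f p) * omega n ^ (p * k)) * (\<Sum>q<n. of_real (g q) * omega n ^ (q * k))
            * inverse (omega n) ^ (l * k)) / of_nat n
         = complex_of_real (\<Sum>p<n. f p * g ((l + n - p) mod n))"
proof -
  have "(\<Sum>k<n. (\<Sum>p<n. of_real (f p) * omega n ^ (p * k)) * (\<Sum>q<n. of_real (g q) * omega n ^ (q * k))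
            * inverse (omega n) ^ (l * k))
      = (\<Sum>p<n. complex_of_real (f p) * (\<Sum>k<n. omega n ^ (p * k) * ((\<Sum>q<n. of_real (g q) * omega n ^ (q * k))
            * inverse (omega n) ^ (l * k))))"
    by (simp only: mult.assoc swap_lemma)
  also have "\<dots> = (\<Sum>p<n. complex_of_real (f p) * (\<Sum>q<n. complex_of_real (g q) *
        (\<Sum>k<n. omega n ^ (((p + q) mod n) * k) * inverse (omega n) ^ (l * k))))"
  proof (rule sum.cong[OF refl])
    fix p assume "p \<in> {..<n}"
    have "(\<Sum>k<n. omega n ^ (p * k) * ((\<Sum>q<n. of_real (g q) * omega n ^ (q * k)) * inverse (omega n) ^ (l * k)))
       = (\<Sum>k<n. (\<Sum>q<n. of_real (g q) * omega n ^ (q * k)) * (omega n ^ (p * k) * inverse (omega n) ^ (l * k)))"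
      by (simp only: mult.left_commute)
    also have "\<dots> = (\<Sum>q<n. complex_of_real (g q) * (\<Sum>k<n. omega n ^ (q * k) * (omega n ^ (p * k) * inverse (omega n) ^ (l * k))))"
      by (rule swap_lemma)
    also have "\<dots> = (\<Sum>q<n. complex_of_real (g q) * (\<Sum>k<n. omega n ^ (((p + q) mod n) * k) * inverse (omega n) ^ (l * k)))"
      by (simp only: omega_mult_mod[OF assms(1)])
    finally show "complex_of_real (f p) * (\<Sum>k<n. omega n ^ (p * k) * ((\<Sum>q<n. of_real (g q) * omega n ^ (q * k)) * inverse (omega n) ^ (l * k)))
      = complex_of_real (f p) * (\<Sum>q<n. complex_of_real (g q) * (\<Sum>k<n. omega n ^ (((p + q) mod n) * k) * inverse (omega n) ^ (l * k)))" 
      by simp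
  qed
  also have "\<dots> = (\<Sum>p<n. complex_of_real (f p) * (\<Sum>q<n. complex_of_real (g q) *
        (if q = (l + n - p) mod n then of_nat n else 0)))"
    using assms by (intro sum.cong refl arg_cong2[where f="(*)"]) (simp add: orth modD)
  also have "\<dots> = (\<Sum>p<n. complex_of_real (f p) * (complex_of_real (g ((l + n - p) mod n)) * of_nat n))"
    using assms by (intro sum.cong refl arg_cong2[where f="(*)"]) (simp add: if_distrib sum.delta' cong: if_cong)
  also have "\<dots> = complex_of_real (\<Sum>p<n. f p * g ((l + n - p) mod n)) * of_nat n"
    by (simp add: sum_distrib_left sum_distrib_right mult_ac)
  finally show ?thesis using assms by simp
qed

lemma parseval:
  assumes "0 < n"
  shows "(\<Sum>k<n. (cmod (\<Sum>p<n. of_real (f p) * omega n ^ (p * k)))\<^sup>2) = real n * (\<Sum>p<n. (f p)\<^sup>2)"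
proof -
  have cw: "cnj (omega n) = inverse (omega n)" unfolding omega_def by (simp add: cis_cnj)
  have "complex_of_real (\<Sum>k<n. (cmod (\<Sum>p<n. of_real (f p) * omega n ^ (p * k)))\<^sup>2)
     = (\<Sum>k<n. (\<Sum>p<n. of_real (f p) * omega n ^ (p * k)) * (\<Sum>q<n. of_real (f q) * inverse (omega n) ^ (q * k)))"
    by (simp only: of_real_sum complex_norm_square cnj_sum complex_cnj_mult complex_cnj_complex_of_real complex_cnj_power cw)
  also have "\<dots> = (\<Sum>p<n. complex_of_real (f p) * (\<Sum>k<n. omega n ^ (p * k) * (\<Sum>q<n. of_real (f q) * inverse (omega n) ^ (q * k))))"
    by (rule swap_lemma)
  also have "\<dots> = (\<Sum>p<n. complex_of_real (f p) * (\<Sum>q<n. complex_of_real (f q) * (\<Sum>k<n. omega n ^ (p * k) * inverse (omega n) ^ (q * k))))"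
    apply (rule sum.cong[OF refl])
    apply (rule arg_cong2[where f="(*)"], rule refl)
    apply (rule swap_lemma2)
    done
  also have "\<dots> = (\<Sum>p<n. complex_of_real (f p) * (complex_of_real (f p) * of_nat n))"
    using assms by (intro sum.cong refl arg_cong2[where f="(*)"]) (simp add: orth if_distrib sum.delta' cong: if_cong)
  also have "\<dots> = complex_of_real (real n * (\<Sum>p<n. (f p)\<^sup>2))"
    by (simp add: sum_distrib_left power2_eq_square mult_ac)
  finally show ?thesis by (simp only: of_real_eq_iff)
qed

lemma inner:
  fixes c :: real and N p :: nat
  assumes "0 < N" "p < N"
  shows "(\<Sum>q<N. \<Sum>l<N. c * g1 ((l + N - p) mod N) * (F q * g2 ((l + N - q) mod N)))
       = (\<Sum>d<N. \<Sum>u<N. c * F ((d + p) mod N) * (g1 u * g2 ((u + N - d) mod N)))"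
proof -
  have "(\<Sum>q<N. \<Sum>l<N. c * g1 ((l + N - p) mod N) * (F q * g2 ((l + N - q) mod N)))
      = (\<Sum>d<N. \<Sum>l<N. c * g1 ((l + N - p) mod N) * (F ((d + p) mod N) * g2 ((l + N - (d + p) mod N) mod N)))"
    by (rule sum_shift[OF assms(1), symmetric])
  also have "\<dots> = (\<Sum>d<N. \<Sum>u<N. c * F ((d + p) mod N) * (g1 u * g2 ((u + N - d) mod N)))"
  proof (rule sum.cong[OF refl])
    fix d assume d: "d \<in> {..<N}"
    have "(\<Sum>l<N. c * g1 ((l + N - p) mod N) * (F ((d + p) mod N) * g2 ((l + N - (d + p) mod N) mod N)))
      = (\<Sum>u<N. c * g1 (((u + p) mod N + N - p) mod N) * (F ((d + p) mod N) * g2 (((u + p) mod N + N - (d + p) mod N) mod N)))"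
      by (rule sum_shift[OF assms(1), symmetric])
    also have "\<dots> = (\<Sum>u<N. c * F ((d + p) mod N) * (g1 u * g2 ((u + N - d) mod N)))"
      using d assms by (intro sum.cong refl) (simp add: modA modB)
    finally show "(\<Sum>l<N. c * g1 ((l + N - p) mod N) * (F ((d + p) mod N) * g2 ((l + N - (d + p) mod N) mod N)))
      = (\<Sum>u<N. c * F ((d + p) mod N) * (g1 u * g2 ((u + N - d) mod N)))" .
  qed
  finally show ?thesis .
qed

lemma core:
  fixes A :: "nat \<Rightarrow> nat \<Rightarrow> nat \<Rightarrow> nat \<Rightarrow> real" and y :: "nat \<Rightarrow> nat \<Rightarrow> real"
  assumes N: "0 < N"
    and cond: "\<forall>i<m. \<forall>j<m. \<forall>d<N. (\<Sum>b<s. \<Sum>a<n. \<Sum>q<N. A i a b q * A j a b ((q + d) mod N))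
                 = (if i = j \<and> d = 0 then 1 else 0)"
  shows "(\<Sum>a<n. \<Sum>b<s. \<Sum>l<N. (\<Sum>i<m. \<Sum>p<N. A i a b p * y i ((l + N - p) mod N))\<^sup>2)
       = (\<Sum>i<m. \<Sum>u<N. (y i u)\<^sup>2)"
proof -
  have cond': "\<And>i j d. i < m \<Longrightarrow> j < m \<Longrightarrow> d < N \<Longrightarrow>
     (\<Sum>b<s. \<Sum>a<n. \<Sum>q<N. A i a b q * A j a b ((q + d) mod N)) = (if i = j \<and> d = 0 then 1 else 0)"
    using cond by blast
  let ?T = "\<lambda>i a b p l. A i a b p * y i ((l + N - p) mod N)"
  have "(\<Sum>a<n. \<Sum>b<s. \<Sum>l<N. (\<Sum>i<m. \<Sum>p<N. ?T i a b p l)\<^sup>2)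
      = (\<Sum>a<n. \<Sum>b<s. \<Sum>l<N. \<Sum>i<m. \<Sum>j<m. \<Sum>p<N. \<Sum>q<N. ?T i a b p l * ?T j a b q l)"
    by (simp add: power2_eq_square sum_product)
  also have "\<dots> = (\<Sum>a<n. \<Sum>b<s. \<Sum>i<m. \<Sum>j<m. \<Sum>p<N. \<Sum>q<N. \<Sum>l<N. ?T i a b p l * ?T j a b q l)"
    by (rule sum.cong[OF refl], rule sum.cong[OF refl], rule swap_1_4[where L="{..<N}" and I="{..<m}" and J="{..<m}" and P="{..<N}" and Q="{..<N}"])
  also have "\<dots> = (\<Sum>i<m. \<Sum>j<m. \<Sum>a<n. \<Sum>b<s. \<Sum>p<N. \<Sum>q<N. \<Sum>l<N. ?T i a b p l * ?T j a b q l)"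
    by (rule swap_2_2[where A="{..<n}" and B="{..<s}" and I="{..<m}" and J="{..<m}"])
  also have "\<dots> = (\<Sum>i<m. \<Sum>j<m. \<Sum>a<n. \<Sum>b<s. \<Sum>p<N. \<Sum>d<N. \<Sum>u<N.
        A i a b p * A j a b ((d + p) mod N) * (y i u * y j ((u + N - d) mod N)))"
    apply (rule sum.cong[OF refl], rule sum.cong[OF refl], rule sum.cong[OF refl], rule sum.cong[OF refl], rule sum.cong[OF refl])
    apply (rule inner[OF N])
    apply simp
    done
  also have "\<dots> = (\<Sum>i<m. \<Sum>j<m. \<Sum>d<N. \<Sum>u<N. \<Sum>b<s. \<Sum>a<n. \<Sum>p<N.
        A i a b p * A j a b ((d + p) mod N) * (y i u * y j ((u + N - d) mod N)))"
    by (rule sum.cong[OF refl], rule sum.cong[OF refl], rule swap_3_2[where A="{..<n}" and B="{..<s}" and P="{..<N}" and D="{..<N}" and U="{..<N}"])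
  also have "\<dots> = (\<Sum>i<m. \<Sum>j<m. \<Sum>d<N. \<Sum>u<N. (y i u * y j ((u + N - d) mod N)) *
        (\<Sum>b<s. \<Sum>a<n. \<Sum>q<N. A i a b q * A j a b ((q + d) mod N)))"
    apply (rule sum.cong[OF refl])+
    apply (simp only: sum_distrib_left)
    apply (rule sum.cong[OF refl])+
    apply (simp add: ac_simps)
    done
  also have "\<dots> = (\<Sum>i<m. \<Sum>j<m. \<Sum>d<N. \<Sum>u<N. (y i u * y j ((u + N - d) mod N)) *
        (if i = j \<and> d = 0 then 1 else 0))"
    apply (rule sum.cong[OF refl], rule sum.cong[OF refl], rule sum.cong[OF refl], rule sum.cong[OF refl])
    apply (subst cond')
    apply simp_all
    done
  also have "\<dots> = (\<Sum>i<m. \<Sum>j<m. if j = i then (\<Sum>u<N. (y i u)\<^sup>2) else 0)"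
  proof (rule sum.cong[OF refl], rule sum.cong[OF refl])
    fix i j
    have "(\<Sum>d<N. \<Sum>u<N. y i u * y j ((u + N - d) mod N) * (if i = j \<and> d = 0 then 1 else 0))
        = (\<Sum>d<N. if d = 0 then (if j = i then (\<Sum>u<N. y i u * y j ((u + N - d) mod N)) else 0) else 0)"
      by (rule sum.cong[OF refl]) auto
    also have "\<dots> = (if j = i then (\<Sum>u<N. y i u * y j ((u + N - 0) mod N)) else 0)"
      using N by (simp add: sum.delta sum.delta')
    also have "\<dots> = (if j = i then (\<Sum>u<N. (y i u)\<^sup>2) else 0)"
    proof (cases "j = i")
      case True
      have "(\<Sum>u<N. y i u * y j ((u + N - 0) mod N)) = (\<Sum>u<N. (y i u)\<^sup>2)"
        by (rule sum.cong[OF refl]) (simp add: True power2_eq_square)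
      then show ?thesis using True by simp
    qed simp
    finally show "(\<Sum>d<N. \<Sum>u<N. y i u * y j ((u + N - d) mod N) * (if i = j \<and> d = 0 then 1 else 0))
        = (if j = i then (\<Sum>u<N. (y i u)\<^sup>2) else 0)" .
  qed
  also have "\<dots> = (\<Sum>i<m. \<Sum>u<N. (y i u)\<^sup>2)"
    by (simp add: sum.delta sum.delta')
  finally show ?thesis .
qed

lemma sum_split_ms:
  fixes s :: nat
  shows "(\<Sum>t<m * s. F t) = (\<Sum>i<m. \<Sum>c<s. F (i * s + c))"
proof -
  have "(\<Sum>t<m * s. F t) = (\<Sum>i<m. sum F {i * s..<i * s + s})"
    by (rule sum.nat_group[symmetric])
  also have "\<dots> = (\<Sum>i<m. \<Sum>c<s. F (i * s + c))"
  proof (rule sum.cong[OF refl])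
    fix i
    have "sum F {0 + i * s..<s + i * s} = (\<Sum>c\<in>{0..<s}. F (c + i * s))"
      by (rule sum.shift_bounds_nat_ivl)
    then show "sum F {i * s..<i * s + s} = (\<Sum>c<s. F (i * s + c))"
      by (simp add: add.commute atLeast0LessThan)
  qed
  finally show ?thesis .
qed

lemma fhat_tid:
  assumes "0 < n3"
  shows "fhat n3 tid a b k = (if a = b then 1 else 0)"
proof -
  have "fhat n3 tid a b k = (\<Sum>l<n3. if l = 0 then (if a = b then 1 else 0) else 0)"
    unfolding fhat_def tid_def by (rule sum.cong[OF refl]) auto
  also have "\<dots> = (if a = b then 1 else 0)" using assms by (simp add: sum.delta)
  finally show ?thesis .
qed

lemma tkron_eq:
  assumes "0 < n3" "l < n3"
  shows "tkron n3 s s Y tid i j l = (if i mod s = j mod s then Y (i div s) (j div s) l else 0)"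
proof (cases "i mod s = j mod s")
  case True
  have "tkron n3 s s Y tid i j l
      = Re ((\<Sum>k<n3. (\<Sum>p<n3. of_real (Y (i div s) (j div s) p) * omega n3 ^ (p * k)) * inverse (omega n3) ^ (l * k)) / of_nat n3)"
    unfolding tkron_def ifft_def fhat_tid[OF assms(1)] using True by (simp add: fhat_def)
  also have "\<dots> = Y (i div s) (j div s) l" by (simp only: inv_dft[OF assms]) simp
  finally show ?thesis using True by simp
next
  case False
  then show ?thesis unfolding tkron_def ifft_def fhat_tid[OF assms(1)] by simp
qed

lemma tprod_eq:
  assumes "0 < n3" "l < n3"
  shows "tprod n3 r A B i j l = (\<Sum>t<r. \<Sum>p<n3. A i t p * B t j ((l + n3 - p) mod n3))"
proof -
  have "tprod n3 r A B i j l = Re ((\<Sum>k<n3. (\<Sum>t<r. fhat n3 A i t k * fhat n3 B t j k) * inverse (omega n3) ^ (l * k)) / of_nat n3)"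
    unfolding tprod_def ifft_def by simp
  also have "\<dots> = Re (\<Sum>t<r. (\<Sum>k<n3. fhat n3 A i t k * fhat n3 B t j k * inverse (omega n3) ^ (l * k)) / of_nat n3)"
    by (simp only: sum_distrib_right sum_divide_distrib[symmetric]) (simp only: sum.swap[where A="{..<n3}"])
  also have "\<dots> = Re (\<Sum>t<r. complex_of_real (\<Sum>p<n3. A i t p * B t j ((l + n3 - p) mod n3)))"
    unfolding fhat_def by (simp only: conv_dft[OF assms])
  also have "\<dots> = (\<Sum>t<r. \<Sum>p<n3. A i t p * B t j ((l + n3 - p) mod n3))"
    by simp
  finally show ?thesis .
qed

lemma ttrace_eq:
  assumes "0 < n3" "l < n3"
  shows "ttrace n3 q X l = (\<Sum>i<q. X i i l)"
proof -
  have "ttrace n3 q X l = Re ((\<Sum>k<n3. (\<Sum>i<q. fhat n3 X i i k) * inverse (omega n3) ^ (l * k)) / of_nat n3)"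
    unfolding ttrace_def ifft_def by simp
  also have "\<dots> = Re (\<Sum>i<q. (\<Sum>k<n3. fhat n3 X i i k * inverse (omega n3) ^ (l * k)) / of_nat n3)"
    by (simp only: sum_distrib_right sum_divide_distrib[symmetric]) (simp only: sum.swap[where A="{..<n3}"])
  also have "\<dots> = Re (\<Sum>i<q. complex_of_real (X i i l))"
    unfolding fhat_def by (simp only: inv_dft[OF assms])
  also have "\<dots> = (\<Sum>i<q. X i i l)"
    by simp
  finally show ?thesis .
qed

theorem proposition9:
  fixes m n s n3 :: nat and Y V :: tensor
  assumes "0 < n3"
    and "\<forall>i<m. \<forall>j<m. \<forall>l<n3. tdiamond n3 n s V i j l = tid i j l"
  shows "frob n s n3 (tprod n3 (m * s) V (tkron n3 s s Y tid)) = tl2 m n3 Y"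
proof -
  note N = assms(1)
  have cond: "\<forall>i<m. \<forall>j<m. \<forall>d<n3. (\<Sum>b<s. \<Sum>a<n. \<Sum>q<n3. V a (i * s + b) q * V a (j * s + b) ((q + d) mod n3))
                 = (if i = j \<and> d = 0 then 1 else 0)"
  proof (intro allI impI)
    fix i j d assume ij: "i < m" "j < m" and d: "d < n3"
    have "tdiamond n3 n s V i j d = (\<Sum>b<s. tprod n3 n (ttrans n3 (tblock s i V)) (tblock s j V) b b d)"
      unfolding tdiamond_def tinner_def by (rule ttrace_eq[OF N d])
    also have "\<dots> = (\<Sum>b<s. \<Sum>a<n. \<Sum>p<n3. V a (i * s + b) ((n3 - p) mod n3) * V a (j * s + b) ((d + n3 - p) mod n3))"
      by (simp only: tprod_eq[OF N d]) (simp add: ttrans_def tblock_def)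
    also have "\<dots> = (\<Sum>b<s. \<Sum>a<n. \<Sum>q<n3. V a (i * s + b) q * V a (j * s + b) ((q + d) mod n3))"
    proof (rule sum.cong[OF refl], rule sum.cong[OF refl])
      fix b a
      have "(\<Sum>p<n3. V a (i * s + b) ((n3 - p) mod n3) * V a (j * s + b) ((d + n3 - p) mod n3))
          = (\<Sum>p<n3. V a (i * s + b) ((n3 - p) mod n3) * V a (j * s + b) ((d + (n3 - p) mod n3) mod n3))"
        using d by (intro sum.cong refl) (simp add: modC)
      also have "\<dots> = (\<Sum>q<n3. V a (i * s + b) q * V a (j * s + b) ((d + q) mod n3))"
        by (rule sum_refl[OF N, where f="\<lambda>q. V a (i * s + b) q * V a (j * s + b) ((d + q) mod n3)"])
      finally show "(\<Sum>p<n3. V a (i * s + b) ((n3 - p) mod n3) * V a (j * s + b) ((d + n3 - p) mod n3))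
          = (\<Sum>q<n3. V a (i * s + b) q * V a (j * s + b) ((q + d) mod n3))"
        by (simp add: add.commute)
    qed
    finally have "(\<Sum>b<s. \<Sum>a<n. \<Sum>q<n3. V a (i * s + b) q * V a (j * s + b) ((q + d) mod n3)) = tdiamond n3 n s V i j d" ..
    also have "\<dots> = tid i j d" using assms(2) ij d by blast
    finally show "(\<Sum>b<s. \<Sum>a<n. \<Sum>q<n3. V a (i * s + b) q * V a (j * s + b) ((q + d) mod n3))
                 = (if i = j \<and> d = 0 then 1 else 0)" by (simp add: tid_def)
  qed
  have Pe: "tprod n3 (m * s) V (tkron n3 s s Y tid) a b l = (\<Sum>i<m. \<Sum>p<n3. V a (i * s + b) p * Y i 0 ((l + n3 - p) mod n3))"
    if b: "b < s" and l: "l < n3" for a b l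
  proof -
    have "tprod n3 (m * s) V (tkron n3 s s Y tid) a b l
        = (\<Sum>t<m * s. \<Sum>p<n3. V a t p * (if t mod s = b mod s then Y (t div s) (b div s) ((l + n3 - p) mod n3) else 0))"
      using N by (simp add: tprod_eq[OF N l] tkron_eq)
    also have "\<dots> = (\<Sum>i<m. \<Sum>c<s. \<Sum>p<n3. V a (i * s + c) p * (if c = b then Y i 0 ((l + n3 - p) mod n3) else 0))"
      unfolding sum_split_ms using b by (intro sum.cong refl) simp
    also have "\<dots> = (\<Sum>i<m. \<Sum>c<s. if c = b then (\<Sum>p<n3. V a (i * s + c) p * Y i 0 ((l + n3 - p) mod n3)) else 0)"
      by (intro sum.cong refl) auto
    also have "\<dots> = (\<Sum>i<m. \<Sum>p<n3. V a (i * s + b) p * Y i 0 ((l + n3 - p) mod n3))"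
      using b by (simp add: sum.delta sum.delta')
    finally show ?thesis .
  qed
  have "(\<Sum>a<n. \<Sum>b<s. \<Sum>l<n3. (tprod n3 (m * s) V (tkron n3 s s Y tid) a b l)\<^sup>2)
      = (\<Sum>a<n. \<Sum>b<s. \<Sum>l<n3. (\<Sum>i<m. \<Sum>p<n3. V a (i * s + b) p * Y i 0 ((l + n3 - p) mod n3))\<^sup>2)"
    by (intro sum.cong refl) (simp add: Pe)
  also have "\<dots> = (\<Sum>i<m. \<Sum>u<n3. (Y i 0 u)\<^sup>2)"
    by (rule core[OF N, where A="\<lambda>i a b p. V a (i * s + b) p" and y="\<lambda>i u. Y i 0 u", OF cond])
  finally have L: "frob n s n3 (tprod n3 (m * s) V (tkron n3 s s Y tid)) = sqrt (\<Sum>i<m. \<Sum>u<n3. (Y i 0 u)\<^sup>2)"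
    unfolding frob_def by simp
  have "(\<Sum>k<n3. \<Sum>i<m. (cmod (fhat n3 Y i 0 k))\<^sup>2) = (\<Sum>i<m. \<Sum>k<n3. (cmod (fhat n3 Y i 0 k))\<^sup>2)"
    by (rule sum.swap)
  also have "\<dots> = (\<Sum>i<m. real n3 * (\<Sum>u<n3. (Y i 0 u)\<^sup>2))"
    unfolding fhat_def by (simp only: parseval[OF N])
  also have "\<dots> = real n3 * (\<Sum>i<m. \<Sum>u<n3. (Y i 0 u)\<^sup>2)"
    by (simp add: sum_distrib_left)
  finally have "tl2 m n3 Y = 1 / sqrt (real n3) * sqrt (real n3 * (\<Sum>i<m. \<Sum>u<n3. (Y i 0 u)\<^sup>2))"
    unfolding tl2_def by simp
  also have "\<dots> = sqrt (\<Sum>i<m. \<Sum>u<n3. (Y i 0 u)\<^sup>2)"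
    using N by (simp add: real_sqrt_mult)
  finally show ?thesis using L by simp
qed

end
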